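(* Let $\mathbf{F}$ be a field of characteristic $0$, $\Lambda\in\mathbf{Z}_{\ge 1}$, and let $\mathcal{M}$ be a finite dimensional $2$-irreducible triangular module over the Lie algebra $s\ell_2^{\Lambda}$ (with respect to the Levi factor $s\ell_2=\mathbf{F}f\oplus\mathbf{F}h\oplus\mathbf{F}e$). If $rad(s\ell_2^{\Lambda})\cdot\mathcal{M}\neq\{0\}$, then $\mathcal{M}$ is isomorphic to $\mathcal{M}_{m,n}^{s,N}(a_1,\dots,a_{n-s})$ for some scalars $a_1,\dots,a_{n-s}\in\mathbf{F}$ and some nonnegative integers $m,n,s,N$ satisfying $$m+2s=\Lambda+n+2N,\qquad n\ge s\ge 0,\qquad m\ge N\ge 0.$$
   Context: The Lie algebra $s\ell_2^{\Lambda}$ has basis $f,h,e,z_0,\dots,z_\Lambda$ with brackets $[h,e]=2e$, $[h,f]=-2f$, $[e,f]=h$, $[z_j,z_{j'}]=0$, $[h,z_j]=(\Lambda-2j)z_j$, $[f,z_j]=z_{j+1}$, $[e,z_j]=j(\Lambda-j+1)z_{j-1}$ for $0\le j,j'\le\Lambda$, where $z_j:=0$ for $j\notin\{0,\dots,\Lambda\}$. Its radical (which is also its nil radical) is $rad(s\ell_2^{\Lambda})=\mathbf{F}z_0\oplus\cdots\oplus\mathbf{F}z_\Lambda$, and $s\ell_2=\mathbf{F}f\oplus\mathbf{F}h\oplus\mathbf{F}e$ is a Levi factor. A finite dimensional graded vector space $V=\bigoplus_{k\ge 0}V_k$ has $V_k=\{0\}$ for large $k$. A triangular linear transformation of $V$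 is a linear map $g$ with $g(\bigoplus_{k\ge j}V_k)\subseteq\bigoplus_{k\ge j}V_k$ for all $j\ge0$; these form the Lie algebra $g\ell^{\bigtriangleup}(V)$, and $g\ell^{\bigtriangleup}_j(V)=\{g\in g\ell^{\bigtriangleup}(V): g(V_k)\subseteq V_{k+j}\ \forall k\}$. A triangular $\mathcal{L}$-module (with respect to a Levi factor $\mathcal{L}_{semi}$) is a graded vector space $V$ with a Lie homomorphism $\varphi:\mathcal{L}\to g\ell^{\bigtriangleup}(V)$ such that $\varphi(\mathcal{L}_{semi})\subseteq g\ell^{\bigtriangleup}_0(V)$ and $\varphi(nil\,\mathcal{L})\subseteq\bigoplus_{j\ge1}g\ell^{\bigtriangleup}_j(V)$, where $nil\,\mathcal{L}$ is the largest nilpotent ideal. Such a module $V=\bigoplus_{k=0}^{n}V_k$ is $(n+1)$-irreducible if each $V_k$ ($0\le k\le n$) is an irreducible $\mathcal{L}_{semi}$-module; in particular $2$-irreducible means $V=V_0\oplus V_1$ with $V_0,V_1$ irreducible $\mathcal{L}_{semi}$-modules. For nonnegative integers $m,n,s,N$ with $m+2s=\Lambda+n+2N$, $n\ge s\ge0$, $m\ge N\ge0$, and scalars $a_1,\dots,a_{n-s}\in\mathbf{F}$ (set $a_0:=1$), the module $\mathcal{M}_{m,n}^{s,N}(a_1,\dots,a_{n-s})$ is the graded space $V_0\oplus V_1$ with $V_0=\bigoplus_{i=0}^n\mathbf{F}u_i$, $V_1=\bigoplus_{k=0}^m\mathbf{F}w_k$ (with $u_i:=0$ for $i\notin\{0,\dots,n\}$,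 $w_k:=0$ for $k\notin\{0,\dots,m\}$) and action: $h\cdot u_i=(n-2i)u_i$, $f\cdot u_i=u_{i+1}$, $e\cdot u_i=i(n-i+1)u_{i-1}$ for $0\le i\le n$; $h\cdot w_k=(m-2k)w_k$, $f\cdot w_k=w_{k+1}$, $e\cdot w_k=k(m-k+1)w_{k-1}$ for $0\le k\le m$; $z_j\cdot w_k=0$ for all $0\le j\le\Lambda$, $0\le k\le m$; $z_j\cdot u_i=0$ for $0\le j\le\Lambda$, $0\le i\le n$ with $i+j\le s-1$; for $0\le j\le\min\{s+\theta,\Lambda\}$ and $0\le\theta\le n-s$: $$z_j\cdot u_{s-j+\theta}=\Big(\sum_{k=0}^{\theta}(-1)^{j-k}\binom{j}{k}\frac{(m-N-\theta+k)!}{(N+\theta-k)!\,m!}\,a_{\theta-k}\Big)w_{\theta+N};$$ for $\Lambda\ge j\ge\theta\ge1$: $$z_j\cdot u_{n-j+\theta}=\Big(\sum_{k=0}^{j-\theta}(-1)^{j-\theta-k}\binom{j}{\theta+k}\frac{(m-N-n+s+k)!}{(N+n-s-k)!\,m!}\,a_{n-s-k}\Big)w_{n-s+\theta+N};$$ here $\binom{j}{k}=\frac{j!}{k!(j-k)!}$ for $j\ge k$ and $\binom{j}{k}=0$ for $k>j$. This is a $2$-irreducible triangular $s\ell_2^{\Lambda}$-module. *)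

theory Defs
  imports Complex_Main
begin

text \<open>
  The Lie algebra sl2^L (L = Lambda) has basis f,h,e,z_0,...,z_L.  A representation
  phi : sl2^L -> gl(V) is a linear map; it is a Lie homomorphism iff the images of the
  basis elements satisfy the defining bracket relations (with [X,Y] = XY - YX).
  We therefore describe a representation by the images F = phi(f), H = phi(h),
  E = phi(e) and Z j = phi(z_j) (0 <= j <= L), linear maps of the F-vector space V
  (the carrier is the whole type 'v, with scalar multiplication scale).
  Convention: z_j := 0 for j outside {0..L}.
\<close>

definition zext :: "nat \<Rightarrow> (nat \<Rightarrow> 'v \<Rightarrow> 'v::ab_group_add) \<Rightarrow> nat \<Rightarrow> 'v \<Rightarrow> 'v" where
  "zext L Z j = (if j \<le> L then Z j else (\<lambda>_. 0))"

definition sl2L_rep ::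
  "('a::field \<Rightarrow> 'v::ab_group_add \<Rightarrow> 'v) \<Rightarrow> nat \<Rightarrow> ('v \<Rightarrow> 'v) \<Rightarrow> ('v \<Rightarrow> 'v) \<Rightarrow> ('v \<Rightarrow> 'v)
    \<Rightarrow> (nat \<Rightarrow> 'v \<Rightarrow> 'v) \<Rightarrow> bool" where
  "sl2L_rep scale L F H E Z \<longleftrightarrow>
     vector_space scale \<and>
     Vector_Spaces.linear scale scale F \<and> Vector_Spaces.linear scale scale H \<and>
     Vector_Spaces.linear scale scale E \<and> (\<forall>j\<le>L. Vector_Spaces.linear scale scale (Z j)) \<and>
     (\<forall>v. H (E v) - E (H v) = scale 2 (E v)) \<and>
     (\<forall>v. H (F v) - F (H v) = scale (-2) (F v)) \<and>
     (\<forall>v. E (F v) - F (E v) = H v) \<and>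
     (\<forall>j\<le>L. \<forall>j'\<le>L. \<forall>v. Z j (Z j' v) - Z j' (Z j v) = 0) \<and>
     (\<forall>j\<le>L. \<forall>v. H (Z j v) - Z j (H v) = scale (of_int (int L - 2 * int j)) (Z j v)) \<and>
     (\<forall>j\<le>L. \<forall>v. F (Z j v) - Z j (F v) = zext L Z (j + 1) v) \<and>
     (\<forall>j\<le>L. \<forall>v. E (Z j v) - Z j (E v) =
        (if j = 0 then 0 else scale (of_nat (j * (L - j + 1))) (zext L Z (j - 1) v)))"

definition sl2_irreducible ::
  "('a::field \<Rightarrow> 'v::ab_group_add \<Rightarrow> 'v) \<Rightarrow> ('v \<Rightarrow> 'v) \<Rightarrow> ('v \<Rightarrow> 'v) \<Rightarrow> ('v \<Rightarrow> 'v) \<Rightarrow> 'v set \<Rightarrow> bool" where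
  "sl2_irreducible scale F H E W \<longleftrightarrow>
     W \<noteq> {0} \<and>
     (\<forall>U. module.subspace scale U \<and> U \<subseteq> W \<and> F ` U \<subseteq> U \<and> H ` U \<subseteq> U \<and> E ` U \<subseteq> U
          \<longrightarrow> U = {0} \<or> U = W)"

text \<open>
  A finite dimensional 2-irreducible triangular sl2^L-module V = V0 (+) V1, with respect
  to the Levi factor span(f,h,e); the nil radical is span(z_0,...,z_L).
  Triangularity: phi(sl2) lies in gl_0 (preserves each V_k), phi(nil) lies in the sum of
  gl_j for j >= 1, i.e. (as only grades 0 and 1 occur) z_j maps V0 into V1 and V1 to 0.
\<close>
definition triangular_2irr_module ::
  "('a::field \<Rightarrow> 'v::ab_group_add \<Rightarrow> 'v) \<Rightarrow> nat \<Rightarrow> ('v \<Rightarrow> 'v) \<Rightarrow> ('v \<Rightarrow> 'v) \<Rightarrow> ('v \<Rightarrow> 'v)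
    \<Rightarrow> (nat \<Rightarrow> 'v \<Rightarrow> 'v) \<Rightarrow> 'v set \<Rightarrow> 'v set \<Rightarrow> bool" where
  "triangular_2irr_module scale L F H E Z V0 V1 \<longleftrightarrow>
     sl2L_rep scale L F H E Z \<and>
     (\<exists>B. finite B \<and> module.span scale B = UNIV) \<and>
     module.subspace scale V0 \<and> module.subspace scale V1 \<and>
     V0 \<inter> V1 = {0} \<and> (\<forall>v. \<exists>x\<in>V0. \<exists>y\<in>V1. v = x + y) \<and>
     F ` V0 \<subseteq> V0 \<and> H ` V0 \<subseteq> V0 \<and> E ` V0 \<subseteq> V0 \<and>
     F ` V1 \<subseteq> V1 \<and> H ` V1 \<subseteq> V1 \<and> E ` V1 \<subseteq> V1 \<and>
     (\<forall>j\<le>L. Z j ` V0 \<subseteq> V1 \<and> Z j ` V1 \<subseteq> {0}) \<and>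
     sl2_irreducible scale F H E V0 \<and> sl2_irreducible scale F H E V1"

text \<open>Scalars a_0 := 1, a_1, ..., a_d; a_i := 0 for i > d (such indices only occur
  in terms that the paper leaves undefined, i.e. a_(negative)).\<close>
definition acoef :: "(nat \<Rightarrow> 'a::field) \<Rightarrow> nat \<Rightarrow> int \<Rightarrow> 'a" where
  "acoef a d i = (if i = 0 then 1 else if 1 \<le> i \<and> i \<le> int d then a (nat i) else 0)"

definition coef1 :: "nat \<Rightarrow> nat \<Rightarrow> nat \<Rightarrow> nat \<Rightarrow> (nat \<Rightarrow> 'a::field_char_0) \<Rightarrow> nat \<Rightarrow> nat \<Rightarrow> 'a" where
  "coef1 m n s N a j \<theta> =
     (\<Sum>k = 0..\<theta>. (-1) ^ (j - k) * of_nat (j choose k)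
        * (fact (m - N - \<theta> + k) / (fact (N + \<theta> - k) * fact m))
        * acoef a (n - s) (int \<theta> - int k))"

definition coef2 :: "nat \<Rightarrow> nat \<Rightarrow> nat \<Rightarrow> nat \<Rightarrow> (nat \<Rightarrow> 'a::field_char_0) \<Rightarrow> nat \<Rightarrow> nat \<Rightarrow> 'a" where
  "coef2 m n s N a j \<theta> =
     (\<Sum>k = 0..j - \<theta>. (-1) ^ (j - \<theta> - k) * of_nat (j choose (\<theta> + k))
        * (fact (m + s + k - N - n) / (fact (N + n - s - k) * fact m))
        * acoef a (n - s) (int n - int s - int k))"

text \<open>
  The module V is isomorphic (as a graded sl2^L-module) to M_{m,n}^{s,N}(a_1..a_(n-s))
  iff V has a basis u_0..u_n of V0 and w_0..w_m of V1 on which F,H,E,Z act by the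
  defining formulas of M_{m,n}^{s,N}(a).  (u_i := 0, w_k := 0 out of range.)
\<close>
definition is_model_basis ::
  "('a::field_char_0 \<Rightarrow> 'v::ab_group_add \<Rightarrow> 'v) \<Rightarrow> nat \<Rightarrow> ('v \<Rightarrow> 'v) \<Rightarrow> ('v \<Rightarrow> 'v) \<Rightarrow> ('v \<Rightarrow> 'v)
    \<Rightarrow> (nat \<Rightarrow> 'v \<Rightarrow> 'v) \<Rightarrow> 'v set \<Rightarrow> 'v set
    \<Rightarrow> nat \<Rightarrow> nat \<Rightarrow> nat \<Rightarrow> nat \<Rightarrow> (nat \<Rightarrow> 'a) \<Rightarrow> (nat \<Rightarrow> 'v) \<Rightarrow> (nat \<Rightarrow> 'v) \<Rightarrow> bool" where
  "is_model_basis scale L F H E Z V0 V1 m n s N a u w \<longleftrightarrow>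
     inj_on u {..n} \<and> \<not> module.dependent scale (u ` {..n}) \<and> module.span scale (u ` {..n}) = V0 \<and>
     inj_on w {..m} \<and> \<not> module.dependent scale (w ` {..m}) \<and> module.span scale (w ` {..m}) = V1 \<and>
     (\<forall>i\<le>n. H (u i) = scale (of_int (int n - 2 * int i)) (u i)) \<and>
     (\<forall>i\<le>n. F (u i) = (if i < n then u (i + 1) else 0)) \<and>
     (\<forall>i\<le>n. E (u i) = (if i = 0 then 0 else scale (of_nat (i * (n - i + 1))) (u (i - 1)))) \<and>
     (\<forall>k\<le>m. H (w k) = scale (of_int (int m - 2 * int k)) (w k)) \<and>
     (\<forall>k\<le>m. F (w k) = (if k < m then w (k + 1) else 0)) \<and>
     (\<forall>k\<le>m. E (w k) = (if k = 0 then 0 else scale (of_nat (k * (m - k + 1))) (w (k - 1)))) \<and>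
     (\<forall>j\<le>L. \<forall>k\<le>m. Z j (w k) = 0) \<and>
     (\<forall>j\<le>L. \<forall>i\<le>n. i + j < s \<longrightarrow> Z j (u i) = 0) \<and>
     (\<forall>\<theta>\<le>n - s. \<forall>j. j \<le> min (s + \<theta>) L \<longrightarrow>
        Z j (u (s + \<theta> - j)) =
          (if \<theta> + N \<le> m then scale (coef1 m n s N a j \<theta>) (w (\<theta> + N)) else 0)) \<and>
     (\<forall>j \<theta>. 1 \<le> \<theta> \<and> \<theta> \<le> j \<and> j \<le> L \<and> j \<le> n + \<theta> \<longrightarrow>
        Z j (u (n + \<theta> - j)) =
          (if n - s + \<theta> + N \<le> m then scale (coef2 m n s N a j \<theta>) (w (n - s + \<theta> + N)) else 0))"

end

theory Submission
  imports Defs "HOL-Computational_Algebra.Polynomial"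
begin

locale VS = vector_space
begin

definition linop :: "('b \<Rightarrow> 'b) \<Rightarrow> bool" where
  "linop f \<longleftrightarrow> (\<forall>x y. f (x + y) = f x + f y) \<and> (\<forall>c x. f (c *s x) = c *s f x)"

lemma lin_mh: "linop f \<Longrightarrow> Modules.module_hom scale scale f"
  unfolding linop_def Modules.module_hom_iff by (auto simp: module_axioms)

lemma lin_add: "linop f \<Longrightarrow> f (x + y) = f x + f y" by (simp add: linop_def)
lemma lin_scale: "linop f \<Longrightarrow> f (c *s x) = c *s f x" by (simp add: linop_def)
lemma lin_0: "linop f \<Longrightarrow> f 0 = 0" using module_hom.zero[OF lin_mh] .
lemma lin_diff: "linop f \<Longrightarrow> f (x - y) = f x - f y" using module_hom.diff[OF lin_mh] .
lemma lin_neg: "linop f \<Longrightarrow> f (- x) = - f x" using module_hom.neg[OF lin_mh] .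
lemma lin_sum: "linop f \<Longrightarrow> f (sum g S) = (\<Sum>a\<in>S. f (g a))" using module_hom.sum[OF lin_mh] .

lemma lin_id: "linop (\<lambda>x. x)" by (simp add: linop_def)
lemma lin_comp: "linop f \<Longrightarrow> linop g \<Longrightarrow> linop (\<lambda>x. f (g x))" by (simp add: linop_def)
lemma lin_o: "linop f \<Longrightarrow> linop g \<Longrightarrow> linop (f o g)" by (simp add: linop_def)
lemma lin_plus: "linop f \<Longrightarrow> linop g \<Longrightarrow> linop (\<lambda>x. f x + g x)"
  by (simp add: linop_def scale_right_distrib)
lemma lin_minus: "linop f \<Longrightarrow> linop g \<Longrightarrow> linop (\<lambda>x. f x - g x)"
  by (simp add: linop_def scale_right_diff_distrib)
lemma lin_smul: "linop f \<Longrightarrow> linop (\<lambda>x. c *s f x)"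
  by (simp add: linop_def scale_right_distrib mult.commute)
lemma lin_scal: "linop (\<lambda>x. c *s x)"
  by (simp add: linop_def scale_right_distrib mult.commute)
lemma lin_pow: "linop f \<Longrightarrow> linop (f ^^ k)"
  by (induction k) (auto simp: linop_def)
lemma lin_zero: "linop (\<lambda>x. 0)" by (simp add: linop_def)

lemma lin_span_image: "linop f \<Longrightarrow> f ` span S = span (f ` S)"
  using module_hom.span_image[OF lin_mh] by simp

lemma lin_eq_0_on_span: "linop f \<Longrightarrow> (\<And>x. x \<in> S \<Longrightarrow> f x = 0) \<Longrightarrow> x \<in> span S \<Longrightarrow> f x = 0"
  using module_hom.eq_0_on_span[OF lin_mh] by blast

lemma lin_invariant_span: "linop f \<Longrightarrow> f ` S \<subseteq> span S \<Longrightarrow> f ` span S \<subseteq> span S"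
  by (metis lin_span_image span_minimal subspace_span)

definition opp :: "'a poly \<Rightarrow> ('b \<Rightarrow> 'b) \<Rightarrow> 'b \<Rightarrow> 'b" where
  "opp p A v = (\<Sum>k\<le>degree p. coeff p k *s (A ^^ k) v)"

lemma opp_bound: "degree p \<le> D \<Longrightarrow> opp p A v = (\<Sum>k\<le>D. coeff p k *s (A ^^ k) v)"
  unfolding opp_def
  by (rule sum.mono_neutral_left) (auto simp: coeff_eq_0)

lemma opp_pCons: "opp (pCons a p) A v = a *s v + opp p A (A v)"
proof -
  have "opp (pCons a p) A v = (\<Sum>k\<le>Suc (degree p). coeff (pCons a p) k *s (A ^^ k) v)"
    by (rule opp_bound) (simp add: degree_pCons_le)
  also have "\<dots> = a *s v + (\<Sum>k\<le>degree p. coeff p k *s (A ^^ k) (A v))"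
    by (subst sum.atMost_Suc_shift) (simp add: funpow_Suc_right del: funpow.simps)
  finally show ?thesis by (simp add: opp_def)
qed

lemma opp_0 [simp]: "opp 0 A v = 0" by (simp add: opp_def)

lemma opp_const: "opp [:a:] A v = a *s v" by (simp add: opp_def)

lemma opp_add: "opp (p + q) A v = opp p A v + opp q A v"
proof -
  let ?D = "max (degree p) (degree q)"
  have "opp (p + q) A v = (\<Sum>k\<le>?D. coeff (p+q) k *s (A ^^ k) v)"
    by (rule opp_bound) (simp add: degree_add_le)
  also have "\<dots> = (\<Sum>k\<le>?D. coeff p k *s (A ^^ k) v) + (\<Sum>k\<le>?D. coeff q k *s (A ^^ k) v)"
    by (simp add: scale_left_distrib sum.distrib)
  also have "\<dots> = opp p A v + opp q A v"
  proof -
    have 1: "opp p A v = (\<Sum>k\<le>?D. coeff p k *s (A ^^ k) v)" by (rule opp_bound) simp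
    have 2: "opp q A v = (\<Sum>k\<le>?D. coeff q k *s (A ^^ k) v)" by (rule opp_bound) simp
    show ?thesis unfolding 1 2 ..
  qed
  finally show ?thesis .
qed

lemma opp_smult: "opp (smult c p) A v = c *s opp p A v"
proof -
  have "opp (smult c p) A v = (\<Sum>k\<le>degree p. coeff (smult c p) k *s (A ^^ k) v)"
    by (rule opp_bound) simp
  then show ?thesis by (simp add: opp_def scale_sum_right)
qed

lemma opp_minus: "opp (- p) A v = - opp p A v"
  using opp_smult[of "-1" p A v] by simp

lemma opp_diff: "opp (p - q) A v = opp p A v - opp q A v"
  using opp_add[of p "-q" A v] opp_minus[of q A v] by simp

lemma opp_lin: "linop A \<Longrightarrow> linop (opp p A)"
proof (induction p)
  case 0
  have "opp 0 A = (\<lambda>x. 0)" by (rule ext) simp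
  then show ?case by (simp add: lin_zero)
next
  case (pCons a p)
  have "linop (\<lambda>v. opp p A (A v))"
    by (rule lin_comp) (use pCons in auto)
  then have "linop (\<lambda>v. a *s v + opp p A (A v))"
    by (intro lin_plus lin_scal)
  moreover have "opp (pCons a p) A = (\<lambda>v. a *s v + opp p A (A v))"
    by (rule ext) (simp add: opp_pCons)
  ultimately show ?case by simp
qed

lemma opp_pCons': "linop A \<Longrightarrow> opp (pCons a p) A v = a *s v + A (opp p A v)"
proof -
  assume A: "linop A"
  have "opp p A (A v) = A (opp p A v)"
  proof (induction p arbitrary: v)
    case 0 then show ?case by (simp add: lin_0[OF A])
  next
    case (pCons b p)
    then show ?case by (simp add: opp_pCons lin_add[OF A] lin_scale[OF A])
  qed
  then show ?thesis by (simp add: opp_pCons)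
qed

lemma opp_mult: "linop A \<Longrightarrow> opp (p * q) A v = opp p A (opp q A v)"
proof (induction p arbitrary: v)
  case 0 then show ?case by simp
next
  case (pCons a p)
  have "opp (pCons a p * q) A v = opp (smult a q + pCons 0 (p * q)) A v"
    by (simp add: mult_pCons_left)
  also have "\<dots> = a *s opp q A v + A (opp (p * q) A v)"
    by (simp add: opp_add opp_smult opp_pCons'[OF pCons.prems])
  also have "\<dots> = opp (pCons a p) A (opp q A v)"
    by (simp add: opp_pCons'[OF pCons.prems] pCons.IH[OF pCons.prems])
  finally show ?case .
qed

lemma opp_X: "opp [:c, 1:] A v = c *s v + A v"
  by (simp add: opp_pCons opp_const)

lemma opp_shift:
  assumes A: "linop A" and B: "linop B" and rel: "\<And>x. B (A x) = A (B x) - 2 *s B x"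
  shows "B (opp p A x) = opp (pcompose p [:-2, 1:]) A (B x)"
proof (induction p arbitrary: x)
  case 0 then show ?case by (simp add: lin_0[OF B])
next
  case (pCons a p)
  have "opp (pcompose (pCons a p) [:-2, 1:]) A (B x)
      = a *s B x + opp [:-2,1:] A (opp (pcompose p [:-2, 1:]) A (B x))"
    unfolding pcompose_pCons opp_add opp_const opp_mult[OF A] ..
  also have "\<dots> = a *s B x + (-2) *s B (opp p A x) + A (B (opp p A x))"
    by (simp add: opp_X pCons.IH add.assoc)
  also have "\<dots> = B (opp (pCons a p) A x)"
    by (simp add: opp_pCons'[OF A] lin_add[OF B] lin_scale[OF B] rel)
  finally show ?case by simp
qed

end

locale FD = VS scale for scale :: "'a::field_char_0 \<Rightarrow> 'b::ab_group_add \<Rightarrow> 'b" (infixr \<open>*s\<close> 75) +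
  fixes Bs :: "'b set"
  assumes finB: "finite Bs" and spanB: "span Bs = UNIV"
begin

lemma opp_monom: "opp (monom a k) A v = a *s (A ^^ k) v"
proof -
  have "opp (monom a k) A v = (\<Sum>j\<le>k. coeff (monom a k) j *s (A ^^ j) v)"
    by (rule opp_bound) (rule degree_monom_le)
  also have "\<dots> = a *s (A ^^ k) v"
    by (simp add: if_distrib[of "\<lambda>c. c *s _"] sum.delta cong: if_cong)
  finally show ?thesis .
qed

lemma opp_sum: "finite I \<Longrightarrow> opp (\<Sum>i\<in>I. p i) A v = (\<Sum>i\<in>I. opp (p i) A v)"
  by (induction I rule: finite_induct) (simp_all add: opp_add)

lemma opp_zero_vec: "linop A \<Longrightarrow> opp p A 0 = 0"
  using lin_0[OF opp_lin] by blast

lemma ann_local: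
  assumes A: "linop A"
  shows "\<exists>p. p \<noteq> 0 \<and> opp p A c = 0"
proof -
  define N where "N = card Bs"
  define f where "f k = (A ^^ k) c" for k
  show ?thesis
  proof (cases "inj_on f {0..N}")
    case False
    then obtain i j where ij: "i \<in> {0..N}" "j \<in> {0..N}" "i \<noteq> j" "f i = f j"
      unfolding inj_on_def by blast
    define p :: "'a poly" where "p = monom 1 j - monom 1 i"
    have "coeff p j = 1" using ij by (simp add: p_def)
    then have "p \<noteq> 0" by auto
    moreover have "opp p A c = 0"
      using ij by (simp add: p_def opp_diff opp_monom f_def)
    ultimately show ?thesis by blast
  next
    case True
    define X where "X = f ` {0..N}"
    have cardX: "card X = N + 1" using True by (simp add: X_def card_image)
    have finX: "finite X" by (simp add: X_def)
    have "dependent X"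
    proof (rule ccontr)
      assume "\<not> dependent X"
      then have "card X \<le> card Bs"
        using independent_span_bound[OF finB, of X] spanB by auto
      then show False using cardX N_def by simp
    qed
    then obtain u v where uv: "v \<in> X" "u v \<noteq> 0" "(\<Sum>x\<in>X. u x *s x) = 0"
      using dependent_finite[OF finX] by blast
    define p where "p = (\<Sum>k\<in>{0..N}. monom (u (f k)) k)"
    obtain k0 where k0: "k0 \<in> {0..N}" "v = f k0" using uv X_def by blast
    have "coeff p k0 = u (f k0)"
      using k0 by (simp add: p_def coeff_sum)
    then have "p \<noteq> 0" using uv k0 by auto
    moreover have "opp p A c = (\<Sum>k\<in>{0..N}. u (f k) *s f k)"
      by (simp add: p_def opp_sum opp_monom f_def)
    moreover have "(\<Sum>k\<in>{0..N}. u (f k) *s f k) = (\<Sum>x\<in>X. u x *s x)"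
      unfolding X_def using sum.reindex[OF True, of "\<lambda>x. u x *s x"] by simp
    ultimately show ?thesis using uv by auto
  qed
qed

lemma ann_global:
  assumes A: "linop A"
  shows "\<exists>P. P \<noteq> 0 \<and> (\<forall>x. opp P A x = 0)"
proof -
  define q where "q b = (SOME p. p \<noteq> 0 \<and> opp p A b = 0)" for b
  have q: "q b \<noteq> 0 \<and> opp (q b) A b = 0" for b
    unfolding q_def by (rule someI_ex) (rule ann_local[OF A])
  define P where "P = (\<Prod>b\<in>Bs. q b)"
  have "P \<noteq> 0" using q finB by (simp add: P_def)
  moreover have "opp P A b = 0" if "b \<in> Bs" for b
  proof -
    have "P = (\<Prod>b'\<in>Bs - {b}. q b') * q b"
      using prod.remove[OF finB that, of q] by (simp add: P_def mult.commute)
    then show ?thesis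
      by (simp add: opp_mult[OF A] q opp_zero_vec[OF A])
  qed
  then have "opp P A x = 0" for x
    using lin_eq_0_on_span[OF opp_lin[OF A], of Bs P x] spanB by auto
  ultimately show ?thesis by blast
qed

lemma descent:
  assumes A: "linop A" and B: "linop B" and rel: "\<And>x. B (A x) = A (B x) - 2 *s B x"
    and surj: "\<And>y. y \<in> S \<Longrightarrow> \<exists>x\<in>S. B x = y"
  shows "P \<noteq> 0 \<Longrightarrow> (\<forall>y\<in>S. opp P A y = 0) \<Longrightarrow> y \<in> S \<Longrightarrow> y = 0"
proof (induction "degree P" arbitrary: P y rule: less_induct)
  case less
  show ?case
  proof (cases "degree P = 0")
    case True
    have "coeff P 0 \<noteq> 0" using less.prems(1) True
      by (metis leading_coeff_0_iff)
    moreover have "opp P A y = coeff P 0 *s y"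
      using opp_bound[of P 0 A y] True by simp
    ultimately show ?thesis using less.prems by auto
  next
    case False
    define sh :: "'a poly" where "sh = [:-2, 1:]"
    define Q where "Q = P - pcompose P sh"
    have dsh: "degree sh = 1" by (simp add: sh_def)
    have dc: "degree (pcompose P sh) = degree P" by (simp add: degree_pcompose dsh)
    have lc: "lead_coeff (pcompose P sh) = lead_coeff P"
      using lead_coeff_comp[of sh P] dsh by (simp add: sh_def)
    have dQ: "degree Q \<le> degree P" unfolding Q_def by (rule degree_diff_le) (simp_all add: dc)
    have cQ: "coeff Q (degree P) = 0" unfolding Q_def using lc dc by simp
    have Qnz: "Q \<noteq> 0"
    proof
      assume "Q = 0"
      then have eq: "P = pcompose P sh" by (simp add: Q_def)
      have pe: "poly P x = poly P (x - 2)" for x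
        by (subst eq) (simp add: poly_pcompose sh_def)
      have pk: "poly P (- 2 * of_nat k) = poly P 0" for k
      proof (induction k)
        case (Suc k)
        have "(- 2 * of_nat (Suc k) :: 'a) = - 2 * of_nat k - 2"
          by (simp add: algebra_simps)
        then have "poly P (- 2 * of_nat (Suc k)) = poly P (- 2 * of_nat k - 2)"
          by (rule arg_cong)
        also have "\<dots> = poly P (- 2 * of_nat k)" using pe[of "- 2 * of_nat k"] by simp
        finally show ?case using Suc by simp
      qed simp
      define R where "R = P - [:poly P 0:]"
      have "range (\<lambda>k::nat. - 2 * (of_nat k :: 'a)) \<subseteq> {x. poly R x = 0}"
        using pk by (auto simp: R_def)
      moreover have "infinite (range (\<lambda>k::nat. - 2 * (of_nat k :: 'a)))"
        by (rule range_inj_infinite) (simp add: inj_on_def)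
      ultimately have "infinite {x. poly R x = 0}" using infinite_super by blast
      then have "R = 0" using poly_roots_finite by blast
      then have "P = [:poly P 0:]" by (simp add: R_def)
      then have "degree P = 0" by (metis degree_pCons_0)
      then show False using False by simp
    qed
    have dlt: "degree Q < degree P"
    proof (rule ccontr)
      assume "\<not> degree Q < degree P"
      then have "degree Q = degree P" using dQ by simp
      then have "lead_coeff Q = 0" using cQ by simp
      then show False using Qnz by simp
    qed
    have annQ: "\<forall>y\<in>S. opp Q A y = 0"
    proof
      fix z assume z: "z \<in> S"
      obtain x where x: "x \<in> S" "B x = z" using surj[OF z] by blast
      have "opp (pcompose P sh) A z = B (opp P A x)"
        unfolding sh_def using opp_shift[OF A B rel, of P x] x by simp
      also have "\<dots> = 0" using less.prems(2) x by (simp add: lin_0[OF B])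
      finally show "opp Q A z = 0" using less.prems(2) z by (simp add: Q_def opp_diff)
    qed
    show ?thesis using less.hyps[OF dlt Qnz annQ less.prems(3)] by blast
  qed
qed

lemma fdvs: "\<exists>Bas. finite_dimensional_vector_space scale Bas"
proof -
  obtain Bas where b: "Bas \<subseteq> UNIV" "independent Bas" "UNIV \<subseteq> span Bas" "card Bas = dim UNIV"
    by (rule basis_exists)
  have f: "finite Bas" using independent_span_bound[OF finB b(2)] spanB by auto
  have s: "span Bas = UNIV" using b(3) by blast
  have "finite_dimensional_vector_space scale Bas"
    by (rule finite_dimensional_vector_space.intro[OF vector_space_axioms])
       (rule finite_dimensional_vector_space_axioms.intro[OF f b(2) s])
  then show ?thesis by blast
qed

lemma subspace_dim_eq:
  assumes "subspace S" "subspace T" "S \<subseteq> T" "dim T \<le> dim S" shows "S = T"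
  using fdvs finite_dimensional_vector_space.subspace_dim_equal assms by metis

lemma dim_subset': "S \<subseteq> T \<Longrightarrow> dim S \<le> dim T"
  using fdvs finite_dimensional_vector_space.dim_subset by metis

lemma dim_le_finB: "dim S \<le> card Bs"
  using dim_le_card[of S Bs] spanB finB by auto

lemma subspace_lin_image: "linop f \<Longrightarrow> subspace S \<Longrightarrow> subspace (f ` S)"
  using module_hom.subspace_image[OF lin_mh] by blast

lemma nilpotent:
  assumes A: "linop A" and B: "linop B" and rel: "\<And>x. B (A x) = A (B x) - 2 *s B x"
    and W: "subspace W" and BW: "B ` W \<subseteq> W"
  shows "\<exists>r. \<forall>x\<in>W. (B ^^ r) x = 0"
proof -
  define S where "S k = (B ^^ k) ` W" for k
  have subS: "subspace (S k)" for k
    unfolding S_def by (rule subspace_lin_image[OF lin_pow[OF B] W])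
  have dec: "S (Suc k) \<subseteq> S k" for k
  proof
    fix y assume "y \<in> S (Suc k)"
    then obtain x where "x \<in> W" "y = (B ^^ Suc k) x" by (auto simp: S_def)
    then have "y = (B ^^ k) (B x)" "B x \<in> W" using BW by (auto simp: funpow_Suc_right simp del: funpow.simps)
    then show "y \<in> S k" by (auto simp: S_def)
  qed
  have "\<exists>k. dim (S (Suc k)) = dim (S k)"
  proof (rule ccontr)
    assume "\<nexists>k. dim (S (Suc k)) = dim (S k)"
    then have lt: "dim (S (Suc k)) < dim (S k)" for k
      using dim_subset'[OF dec[of k]] by (metis le_neq_implies_less)
    have "dim (S k) + k \<le> dim (S 0)" for k
    proof (induction k)
      case (Suc k) then show ?case using lt[of k] by simp
    qed simp
    then show False using dim_le_finB[of "S 0"] by (metis add_leD2 not_less_eq_eq)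
  qed
  then obtain k where k: "dim (S (Suc k)) = dim (S k)" by blast
  have eq: "S (Suc k) = S k" using subspace_dim_eq[OF subS subS dec] k by simp
  have surj: "\<exists>x\<in>S k. B x = y" if "y \<in> S k" for y
  proof -
    from that eq have "y \<in> S (Suc k)" by simp
    then obtain x where "x \<in> W" "y = (B ^^ Suc k) x" by (auto simp: S_def)
    then show ?thesis by (intro bexI[of _ "(B ^^ k) x"]) (auto simp: S_def)
  qed
  obtain P where P: "P \<noteq> 0" "\<forall>x. opp P A x = 0" using ann_global[OF A] by blast
  have "y = 0" if "y \<in> S k" for y
    using descent[OF A B rel surj P(1)] P(2) that by blast
  then show ?thesis by (auto simp: S_def)
qed

end

context FD
begin

lemma eig_indep:
  fixes n :: nat
  assumes T: "linop T" and x: "\<And>i. i \<le> n \<Longrightarrow> x i \<noteq> 0 \<and> T (x i) = \<mu> i *s x i"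
    and inj: "inj_on \<mu> {..n}"
  shows "(\<Sum>i\<le>n. c i *s x i) = 0 \<Longrightarrow> i \<le> n \<Longrightarrow> c i = 0"
  using x inj
proof (induction n arbitrary: c i)
  case 0 then show ?case by simp
next
  case (Suc n)
  have x': "\<And>i. i \<le> n \<Longrightarrow> x i \<noteq> 0 \<and> T (x i) = \<mu> i *s x i" using Suc.prems by simp
  have inj': "inj_on \<mu> {..n}" using Suc.prems(4) by (rule inj_on_subset) auto
  let ?m = "\<mu> (Suc n)"
  have "T (\<Sum>i\<le>Suc n. c i *s x i) - ?m *s (\<Sum>i\<le>Suc n. c i *s x i) =
        (\<Sum>i\<le>Suc n. (c i * (\<mu> i - ?m)) *s x i)"
    using Suc.prems(3)
    by (simp add: lin_sum[OF T] lin_scale[OF T] scale_sum_right sum_subtractf[symmetric]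
        scale_left_diff_distrib scale_right_diff_distrib algebra_simps del: sum.atMost_Suc)
  also have "\<dots> = (\<Sum>i\<le>n. (c i * (\<mu> i - ?m)) *s x i)" by simp
  finally have s0: "(\<Sum>i\<le>n. (c i * (\<mu> i - ?m)) *s x i) = 0"
    using Suc.prems(1) by (simp add: lin_0[OF T])
  have low: "c j = 0" if "j \<le> n" for j
  proof -
    have "c j * (\<mu> j - ?m) = 0" using Suc.IH[OF s0 that x' inj'] .
    moreover have "\<mu> j \<noteq> ?m" using Suc.prems(4) that unfolding inj_on_def by force
    ultimately show ?thesis by simp
  qed
  then have "(\<Sum>i\<le>n. c i *s x i) = 0" by simp
  then have "c (Suc n) *s x (Suc n) = 0" using Suc.prems(1) by simp
  then have "c (Suc n) = 0" using Suc.prems(3)[of "Suc n"] by simp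
  then show ?case using low Suc.prems(2) by (cases "i = Suc n") auto
qed

lemma eig_inj:
  fixes n :: nat
  assumes T: "linop T" and x: "\<And>i. i \<le> n \<Longrightarrow> x i \<noteq> 0 \<and> T (x i) = \<mu> i *s x i"
    and inj: "inj_on \<mu> {..n}"
  shows "inj_on x {..n}"
proof
  fix i j assume ij: "i \<in> {..n}" "j \<in> {..n}" "x i = x j"
  then have "\<mu> i *s x i = \<mu> j *s x i" using x[of i] x[of j] by auto
  then have "\<mu> i = \<mu> j" using x[of i] ij by simp
  then show "i = j" using inj ij unfolding inj_on_def by blast
qed

lemma fam_independent:
  fixes n :: nat
  assumes injx: "inj_on x {..n}"
    and fam: "\<And>c i. (\<Sum>i\<le>n. c i *s x i) = 0 \<Longrightarrow> i \<le> n \<Longrightarrow> c i = 0"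
  shows "independent (x ` {..n})"
proof -
  have fin: "finite (x ` {..n})" by simp
  show ?thesis
  proof
    assume "dependent (x ` {..n})"
    then obtain u v where v: "v \<in> x ` {..n}" and uv: "u v \<noteq> 0" and s: "(\<Sum>v\<in>x ` {..n}. u v *s v) = 0"
      unfolding dependent_finite[OF fin] by blast
    have "(\<Sum>i\<le>n. u (x i) *s x i) = 0" using s sum.reindex[OF injx, of "\<lambda>v. u v *s v"] by simp
    then have "\<forall>i\<le>n. u (x i) = 0" using fam[of "\<lambda>i. u (x i)"] by blast
    then show False using v uv by auto
  qed
qed

lemma independent_fam:
  fixes n :: nat
  assumes injx: "inj_on x {..n}" and ind: "independent (x ` {..n})"
    and s: "(\<Sum>i\<le>n. c i *s x i) = 0" and i: "i \<le> n"
  shows "c i = 0"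
proof -
  define u where "u v = c (the_inv_into {..n} x v)" for v
  have "(\<Sum>v\<in>x ` {..n}. u v *s v) = (\<Sum>i\<le>n. u (x i) *s x i)"
    using sum.reindex[OF injx, of "\<lambda>v. u v *s v"] by simp
  also have "\<dots> = (\<Sum>i\<le>n. c i *s x i)"
    by (rule sum.cong) (auto simp: u_def the_inv_into_f_f[OF injx])
  finally have "(\<Sum>v\<in>x ` {..n}. u v *s v) = 0" using s by simp
  then have "u (x i) = 0" using ind i unfolding dependent_finite[OF finite_imageI[OF finite_atMost]]
    by auto
  then show ?thesis using i by (simp add: u_def the_inv_into_f_f[OF injx])
qed

lemma span_fam:
  fixes n :: nat
  assumes injx: "inj_on x {..n}" and v: "v \<in> span (x ` {..n})"
  shows "\<exists>c. v = (\<Sum>i\<le>n. c i *s x i)"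
proof -
  obtain u where "v = (\<Sum>w\<in>x ` {..n}. u w *s w)"
    using v span_finite[of "x ` {..n}"] by auto
  then have "v = (\<Sum>i\<le>n. u (x i) *s x i)"
    using sum.reindex[OF injx, of "\<lambda>w. u w *s w"] by simp
  then show ?thesis by (rule exI[of _ "\<lambda>i. u (x i)"])
qed

end

locale SL2 = FD scale Bs for scale :: "'a::field_char_0 \<Rightarrow> 'b::ab_group_add \<Rightarrow> 'b" (infixr \<open>*s\<close> 75)
  and Bs +
  fixes F H E :: "'b \<Rightarrow> 'b"
  assumes linF: "linop F" and linH: "linop H" and linE: "linop E"
    and hE: "\<And>v. H (E v) = E (H v) + 2 *s E v"
    and hF: "\<And>v. H (F v) = F (H v) - 2 *s F v"
    and eF: "\<And>v. E (F v) = F (E v) + H v"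
begin

lemma H_Fpow: "H ((F ^^ k) x) = (F ^^ k) (H x) - (2 * of_nat k) *s (F ^^ k) x"
proof (induction k arbitrary: x)
  case 0 then show ?case by simp
next
  case (Suc k)
  have "H ((F ^^ Suc k) x) = F (H ((F ^^ k) x)) - 2 *s F ((F ^^ k) x)" by (simp add: hF)
  also have "\<dots> = F ((F ^^ k) (H x)) - (2 * of_nat k) *s F ((F ^^ k) x) - 2 *s F ((F ^^ k) x)"
    by (simp add: Suc lin_diff[OF linF] lin_scale[OF linF])
  also have "\<dots> = (F ^^ Suc k) (H x) - (2 * of_nat (Suc k)) *s (F ^^ Suc k) x"
    by (simp add: algebra_simps scale_left_distrib)
  finally show ?case .
qed

lemma E_Fpow:
  assumes "E y = 0"
  shows "E ((F ^^ Suc k) y) = (F ^^ k) (of_nat (Suc k) *s H y - of_nat (Suc k * k) *s y)"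
proof (induction k)
  case 0 then show ?case by (simp add: eF assms lin_0[OF linF])
next
  case (Suc k)
  have "E ((F ^^ Suc (Suc k)) y) = F (E ((F ^^ Suc k) y)) + H ((F ^^ Suc k) y)"
    by (simp add: eF)
  also have "\<dots> = F ((F ^^ k) (of_nat (Suc k) *s H y - of_nat (Suc k * k) *s y))
       + ((F ^^ Suc k) (H y) - (2 * of_nat (Suc k)) *s (F ^^ Suc k) y)"
    by (simp only: Suc H_Fpow)
  also have "\<dots> = (F ^^ Suc k) (of_nat (Suc k) *s H y - of_nat (Suc k * k) *s y)
       + ((F ^^ Suc k) (H y) - (2 * of_nat (Suc k)) *s (F ^^ Suc k) y)"
    by simp
  also have "\<dots> = (F ^^ Suc k) ((of_nat (Suc k) *s H y - of_nat (Suc k * k) *s y)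
       + (H y - (2 * of_nat (Suc k)) *s y))"
    using lin_pow[OF linF, of "Suc k"]
    by (simp only: lin_add lin_diff lin_scale)
  also have "(of_nat (Suc k) *s H y - of_nat (Suc k * k) *s y) + (H y - (2 * of_nat (Suc k)) *s y)
      = (of_nat (Suc k) *s H y + H y) - (of_nat (Suc k * k) *s y + (2 * of_nat (Suc k)) *s y)"
    by (simp add: algebra_simps)
  also have "\<dots> = (of_nat (Suc k) + 1) *s H y - (of_nat (Suc k * k) + 2 * of_nat (Suc k)) *s y"
    by (simp only: scale_left_distrib scale_one)
  also have "(of_nat (Suc k) + 1 :: 'a) = of_nat (Suc (Suc k))" by simp
  also have "(of_nat (Suc k * k) + 2 * of_nat (Suc k) :: 'a) = of_nat (Suc (Suc k) * Suc k)"
    by (simp add: algebra_simps)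
  finally show ?case .
qed

end

lemma last_true: "P (0::nat) \<Longrightarrow> \<not> P r \<Longrightarrow> \<exists>k. P k \<and> \<not> P (Suc k)"
  by (induction r) auto

context VS
begin
lemma lin_uminus: "linop f \<Longrightarrow> linop (\<lambda>x. - f x)"
  by (simp add: linop_def scale_right_diff_distrib)
lemma subspace_funpow: "subspace W \<Longrightarrow> f ` W \<subseteq> W \<Longrightarrow> x \<in> W \<Longrightarrow> (f ^^ k) x \<in> W"
  by (induction k) auto
end

context SL2
begin

primrec Tp :: "nat \<Rightarrow> 'b \<Rightarrow> 'b" where
  "Tp 0 y = y"
| "Tp (Suc k) y = H (Tp k y) - of_nat k *s Tp k y"

lemma lin_Tp: "linop (Tp k)"
proof (induction k)
  case 0
  have "Tp 0 = (\<lambda>x. x)" by (rule ext) simp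
  then show ?case by (simp add: lin_id)
next
  case (Suc k)
  have "Tp (Suc k) = (\<lambda>x. H (Tp k x) - of_nat k *s Tp k x)" by (rule ext) simp
  moreover have "linop (\<lambda>x. H (Tp k x) - of_nat k *s Tp k x)"
    by (intro lin_minus lin_smul) (rule lin_comp[OF linH Suc], rule Suc)
  ultimately show ?case by simp
qed

lemma Tp_H: "Tp k (H y) = H (Tp k y)"
  by (induction k) (simp_all add: lin_diff[OF linH] lin_scale[OF linH])

lemma Tp_E: "E y = 0 \<Longrightarrow> E (Tp k y) = 0"
proof (induction k)
  case (Suc k)
  have "E (H (Tp k y)) = 0"
    using Suc hE[of "Tp k y"] by (simp add: lin_scale[OF linE] lin_0[OF linH] eq_diff_eq)
  then show ?case using Suc by (simp add: lin_diff[OF linE] lin_scale[OF linE])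
qed simp

lemma E_H0: "E y = 0 \<Longrightarrow> E (H y) = 0"
  using Tp_E[of y 1] by (simp add: lin_diff[OF linE] lin_scale[OF linE])

lemma EF_Tp: "E y = 0 \<Longrightarrow> (E ^^ k) ((F ^^ k) y) = fact k *s Tp k y"
proof (induction k arbitrary: y)
  case 0 then show ?case by simp
next
  case (Suc k)
  define y' where "y' = H y - of_nat k *s y"
  have Ey': "E y' = 0" using Suc.prems E_H0[OF Suc.prems]
    by (simp add: y'_def lin_diff[OF linE] lin_scale[OF linE])
  have eq: "of_nat (Suc k) *s H y - of_nat (Suc k * k) *s y = of_nat (Suc k) *s y'"
    by (simp add: y'_def scale_right_diff_distrib algebra_simps)
  have "(E ^^ Suc k) ((F ^^ Suc k) y) = (E ^^ k) (E ((F ^^ Suc k) y))"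
    by (simp only: funpow_Suc_right o_apply)
  also have "\<dots> = (E ^^ k) ((F ^^ k) (of_nat (Suc k) *s H y - of_nat (Suc k * k) *s y))"
    by (simp only: E_Fpow[OF Suc.prems])
  also have "\<dots> = (E ^^ k) ((F ^^ k) (of_nat (Suc k) *s y'))"
    by (simp only: eq)
  also have "\<dots> = of_nat (Suc k) *s ((E ^^ k) ((F ^^ k) y'))"
    by (simp add: lin_scale[OF lin_pow[OF linE]] lin_scale[OF lin_pow[OF linF]])
  also have "\<dots> = of_nat (Suc k) *s (fact k *s Tp k y')" by (simp add: Suc.IH[OF Ey'])
  also have "Tp k y' = Tp (Suc k) y"
    by (simp add: y'_def lin_diff[OF lin_Tp] lin_scale[OF lin_Tp] Tp_H)
  finally show ?case by (simp add: algebra_simps)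
qed

lemma hw_exists:
  assumes W: "subspace W" and FW: "F ` W \<subseteq> W" and HW: "H ` W \<subseteq> W" and EW: "E ` W \<subseteq> W"
    and nz: "W \<noteq> {0}"
  shows "\<exists>v\<in>W. v \<noteq> 0 \<and> E v = 0 \<and> (\<exists>j::nat. H v = of_nat j *s v)"
proof -
  have relE: "E (H x) = H (E x) - 2 *s E x" for x by (simp add: hE)
  obtain rE where rE: "\<forall>x\<in>W. (E ^^ rE) x = 0" using nilpotent[OF linH linE relE W EW] by blast
  have relF: "F ((\<lambda>x. - H x) x) = (\<lambda>x. - H x) (F x) - 2 *s F x" for x
    by (simp add: lin_neg[OF linF] hF)
  obtain rF where rF: "\<forall>x\<in>W. (F ^^ rF) x = 0"
    using nilpotent[OF lin_uminus[OF linH] linF relF W FW] by blast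
  obtain x where x: "x \<in> W" "x \<noteq> 0" using nz subspace_0[OF W] by blast
  obtain k where k: "(E ^^ k) x \<noteq> 0" "(E ^^ Suc k) x = 0"
    using last_true[of "\<lambda>k. (E ^^ k) x \<noteq> 0" rE] x rE by auto
  define v0 where "v0 = (E ^^ k) x"
  have v0: "v0 \<in> W" "v0 \<noteq> 0" "E v0 = 0" using k x subspace_funpow[OF W EW] by (auto simp: v0_def)
  have TpW: "Tp j y \<in> W" if "y \<in> W" for j y
    using that by (induction j) (auto intro!: subspace_diff[OF W] subspace_scale[OF W] simp: HW[THEN subsetD])
  have "fact rF *s Tp rF v0 = (E ^^ rF) ((F ^^ rF) v0)" using EF_Tp[OF v0(3)] by simp
  also have "\<dots> = 0" using rF v0 lin_0[OF lin_pow[OF linE]] by simp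
  finally have "Tp rF v0 = 0" by simp
  then obtain j where j: "Tp j v0 \<noteq> 0" "Tp (Suc j) v0 = 0"
    using last_true[of "\<lambda>j. Tp j v0 \<noteq> 0" rF] v0 by auto
  show ?thesis
    using j v0 TpW Tp_E[OF v0(3)] by (intro bexI[of _ "Tp j v0"]) auto
qed

end

context SL2
begin

definition std_basis :: "'b set \<Rightarrow> nat \<Rightarrow> (nat \<Rightarrow> 'b) \<Rightarrow> bool" where
  "std_basis W n u \<longleftrightarrow>
     inj_on u {..n} \<and> independent (u ` {..n}) \<and> span (u ` {..n}) = W \<and>
     (\<forall>i\<le>n. H (u i) = of_int (int n - 2 * int i) *s u i) \<and>
     (\<forall>i\<le>n. F (u i) = (if i < n then u (i + 1) else 0)) \<and>
     (\<forall>i\<le>n. E (u i) = (if i = 0 then 0 else of_nat (i * (n - i + 1)) *s u (i - 1)))"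

lemma Hu: "E v = 0 \<Longrightarrow> H v = lam *s v \<Longrightarrow> H ((F ^^ i) v) = (lam - 2 * of_nat i) *s (F ^^ i) v"
  using H_Fpow[of i v] by (simp add: lin_scale[OF lin_pow[OF linF]] scale_left_diff_distrib)

lemma Eu: "E v = 0 \<Longrightarrow> H v = lam *s v \<Longrightarrow>
    E ((F ^^ Suc i) v) = (of_nat (Suc i) * (lam - of_nat i)) *s (F ^^ i) v"
proof -
  assume e: "E v = 0" and h: "H v = lam *s v"
  have "E ((F ^^ Suc i) v) = (F ^^ i) (of_nat (Suc i) *s H v - of_nat (Suc i * i) *s v)"
    by (rule E_Fpow[OF e])
  also have "of_nat (Suc i) *s H v - of_nat (Suc i * i) *s v = (of_nat (Suc i) * (lam - of_nat i)) *s v"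
    by (simp add: h algebra_simps scale_left_diff_distrib)
  finally show ?thesis by (simp add: lin_scale[OF lin_pow[OF linF]])
qed

lemma hw_basis:
  assumes W: "subspace W" and FW: "F ` W \<subseteq> W" and HW: "H ` W \<subseteq> W" and EW: "E ` W \<subseteq> W"
    and irr: "\<forall>U. subspace U \<and> U \<subseteq> W \<and> F ` U \<subseteq> U \<and> H ` U \<subseteq> U \<and> E ` U \<subseteq> U \<longrightarrow> U = {0} \<or> U = W"
    and v: "v \<in> W" "v \<noteq> 0" "E v = 0" "H v = lam *s v"
  shows "\<exists>n. lam = of_nat n \<and> std_basis W n (\<lambda>i. (F ^^ i) v)"
proof -
  define u where "u i = (F ^^ i) v" for i
  have Hu': "H (u i) = (lam - 2 * of_nat i) *s u i" for i using Hu[OF v(3,4)] by (simp add: u_def)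
  have Eu': "E (u (Suc i)) = (of_nat (Suc i) * (lam - of_nat i)) *s u i" for i
    using Eu[OF v(3,4)] by (simp add: u_def)
  have injmu: "inj_on (\<lambda>i. lam - 2 * of_nat i) A" for A by (auto simp: inj_on_def)
  have ex0: "\<exists>i. u i = 0"
  proof (rule ccontr)
    assume "\<nexists>i. u i = 0"
    then have nz: "u i \<noteq> 0" for i by blast
    define N where "N = card Bs"
    have x: "\<And>i. i \<le> N \<Longrightarrow> u i \<noteq> 0 \<and> H (u i) = (lam - 2 * of_nat i) *s u i"
      using nz Hu' by blast
    have inj: "inj_on u {..N}"
      by (rule eig_inj[where n=N and T=H and x=u and \<mu>="\<lambda>i. lam - 2 * of_nat i"]) (use x injmu linH in auto)
    have fam: "(\<Sum>i\<le>N. c i *s u i) = 0 \<Longrightarrow> i \<le> N \<Longrightarrow> c i = 0" for c i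
      by (rule eig_indep[where n=N and T=H and x=u and \<mu>="\<lambda>i. lam - 2 * of_nat i"]) (use x injmu linH in auto)
    have ind: "independent (u ` {..N})"
      using fam_independent[of u N] inj fam by blast
    have "card (u ` {..N}) \<le> card Bs"
      using independent_span_bound[OF finB ind] spanB by auto
    moreover have "card (u ` {..N}) = N + 1"
      using inj by (simp add: card_image)
    ultimately show False by (simp add: N_def)
  qed
  define i0 where "i0 = (LEAST i. u i = 0)"
  have ui0: "u i0 = 0" unfolding i0_def using ex0 by (rule LeastI_ex)
  have nzlt: "u i \<noteq> 0" if "i < i0" for i using not_less_Least[of i "\<lambda>i. u i = 0"] that i0_def by blast
  have "i0 \<noteq> 0" using ui0 v(2) by (cases i0) (auto simp: u_def)
  then obtain n where n: "i0 = Suc n" by (cases i0) auto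
  have unz: "u i \<noteq> 0" if "i \<le> n" for i using nzlt[of i] that n by simp
  have "(of_nat (Suc n) * (lam - of_nat n)) *s u n = 0" using Eu'[of n] ui0 n by (simp add: lin_0[OF linE])
  then have "of_nat (Suc n) * (lam - of_nat n) = 0" using unz[of n] scale_eq_0_iff by blast
  moreover have "(of_nat (Suc n) :: 'a) \<noteq> 0" by (rule of_nat_neq_0)
  ultimately have lam: "lam = of_nat n" by simp
  have uSn: "F (u n) = 0" using ui0 n by (simp add: u_def)
  have x: "\<And>i. i \<le> n \<Longrightarrow> u i \<noteq> 0 \<and> H (u i) = (lam - 2 * of_nat i) *s u i"
    using unz Hu' by blast
  have inj: "inj_on u {..n}" by (rule eig_inj[where n=n and T=H and x=u and \<mu>="\<lambda>i. lam - 2 * of_nat i"]) (use x injmu linH in auto)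
  have fam: "(\<Sum>i\<le>n. c i *s u i) = 0 \<Longrightarrow> i \<le> n \<Longrightarrow> c i = 0" for c i
    by (rule eig_indep[where n=n and T=H and x=u and \<mu>="\<lambda>i. lam - 2 * of_nat i"]) (use x injmu linH in auto)
  have ind: "independent (u ` {..n})"
    using fam_independent[of u n] inj fam by blast
  have uW: "u i \<in> W" for i using subspace_funpow[OF W FW v(1)] by (simp add: u_def)
  define S where "S = span (u ` {..n})"
  have SW: "S \<subseteq> W" unfolding S_def using uW by (intro span_minimal[OF _ W]) auto
  have Fi: "F (u i) = (if i < n then u (i + 1) else 0)" if "i \<le> n" for i
    using that uSn by (auto simp: u_def)
  have Hi: "H (u i) = of_int (int n - 2 * int i) *s u i" for i
    using Hu'[of i] lam by simp
  have Ei: "E (u i) = (if i = 0 then 0 else of_nat (i * (n - i + 1)) *s u (i - 1))" if "i \<le> n" for i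
  proof (cases i)
    case 0 then show ?thesis using v(3) by (simp add: u_def)
  next
    case (Suc j)
    then have "j < n" using that by simp
    then have "(of_nat (Suc j) * (lam - of_nat j) :: 'a) = of_nat (i * (n - i + 1))"
    proof -
      have "n - i + 1 = n - j" using Suc \<open>j < n\<close> by simp
      moreover have "(of_nat (n - j) :: 'a) = of_nat n - of_nat j" using \<open>j < n\<close> by (simp add: of_nat_diff)
      ultimately show ?thesis using Suc lam by (simp only: of_nat_mult)
    qed
    then show ?thesis using Eu'[of j] Suc by simp
  qed
  have inv: "f ` S \<subseteq> S" if "linop f" "\<And>i. i \<le> n \<Longrightarrow> f (u i) \<in> S" for f
    unfolding S_def using lin_invariant_span[OF that(1), of "u ` {..n}"] that(2) by (auto simp: S_def)
  have FS: "F ` S \<subseteq> S" using Fi by (intro inv[OF linF]) (auto simp: S_def span_base span_zero)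
  have HS: "H ` S \<subseteq> S" using Hi by (intro inv[OF linH]) (auto simp: S_def span_base span_scale)
  have ES: "E ` S \<subseteq> S" using Ei by (intro inv[OF linE]) (auto simp: S_def span_base span_scale span_zero)
  have "u 0 \<in> S" by (auto simp: S_def span_base)
  then have "S \<noteq> {0}" using v(2) by (auto simp: u_def)
  then have SeqW: "S = W" using irr FS HS ES SW by (auto simp: S_def)
  have "std_basis W n u"
    unfolding std_basis_def using inj ind SeqW Fi Hi Ei by (auto simp: S_def)
  then show ?thesis using lam by (auto simp: u_def[abs_def])
qed

lemma irr_basis:
  assumes W: "subspace W" and FW: "F ` W \<subseteq> W" and HW: "H ` W \<subseteq> W" and EW: "E ` W \<subseteq> W"
    and irr: "\<forall>U. subspace U \<and> U \<subseteq> W \<and> F ` U \<subseteq> U \<and> H ` U \<subseteq> U \<and> E ` U \<subseteq> U \<longrightarrow> U = {0} \<or> U = W"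
    and nz: "W \<noteq> {0}"
  shows "\<exists>n u. std_basis W n u"
proof -
  obtain v j where "v \<in> W" "v \<noteq> 0" "E v = 0" "H v = of_nat j *s v"
    using hw_exists[OF W FW HW EW nz] by blast
  then show ?thesis using hw_basis[OF W FW HW EW irr] by blast
qed

lemma weight_vec:
  assumes sb: "std_basis W m w" and x: "x \<in> W" "H x = mu *s x" "x \<noteq> 0"
  shows "\<exists>k\<le>m. mu = of_int (int m - 2 * int k) \<and> (\<exists>c. x = c *s w k)"
proof -
  have inj: "inj_on w {..m}" and ind: "independent (w ` {..m})" and sp: "span (w ` {..m}) = W"
    and Hw: "\<forall>k\<le>m. H (w k) = of_int (int m - 2 * int k) *s w k"
    using sb by (auto simp: std_basis_def)
  obtain c where c: "x = (\<Sum>k\<le>m. c k *s w k)" using span_fam[OF inj] x(1) sp by blast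
  define d where "d k = (of_int (int m - 2 * int k) :: 'a)" for k
  have "H x = (\<Sum>k\<le>m. (c k * d k) *s w k)"
    using Hw by (simp add: c lin_sum[OF linH] lin_scale[OF linH] d_def)
  moreover have "mu *s x = (\<Sum>k\<le>m. (c k * mu) *s w k)"
    by (simp add: c scale_sum_right mult.commute)
  ultimately have "(\<Sum>k\<le>m. (c k * d k) *s w k) - (\<Sum>k\<le>m. (c k * mu) *s w k) = 0"
    using x(2) by simp
  then have "(\<Sum>k\<le>m. (c k * (d k - mu)) *s w k) = 0"
    by (simp add: sum_subtractf[symmetric] scale_left_diff_distrib algebra_simps)
  then have z: "c k * (d k - mu) = 0" if "k \<le> m" for k
    using independent_fam[OF inj ind, of "\<lambda>k. c k * (d k - mu)"] that by blast
  obtain k0 where k0: "k0 \<le> m" "c k0 \<noteq> 0"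
  proof (rule ccontr)
    assume "\<not> thesis"
    then have "\<forall>k\<le>m. c k = 0" using that by blast
    then have "x = 0" using c by simp
    then show False using x(3) by simp
  qed
  have mu: "mu = d k0" using z[OF k0(1)] k0(2) by simp
  have "c k = 0" if "k \<le> m" "k \<noteq> k0" for k
  proof -
    have "d k \<noteq> d k0" using that by (simp add: d_def)
    then show ?thesis using z[OF that(1)] mu by simp
  qed
  then have "x = c k0 *s w k0"
    using c k0(1) by (simp add: sum.remove[of "{..m}" k0] sum.neutral)
  then show ?thesis using k0 mu d_def by blast
qed

end

definition Gc :: "(nat \<Rightarrow> 'a::field_char_0) \<Rightarrow> nat \<Rightarrow> nat \<Rightarrow> 'a" where
  "Gc \<beta> j t = (\<Sum>k = 0..t. (-1) ^ (j - k) * of_nat (j choose k) * \<beta> (t - k))"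

lemma Gc_0: "Gc \<beta> 0 t = \<beta> t"
proof -
  have "Gc \<beta> 0 t = (\<Sum>k\<in>{0..t}. if k = 0 then \<beta> t else 0)"
    unfolding Gc_def by (rule sum.cong) auto
  also have "\<dots> = \<beta> t" by simp
  finally show ?thesis .
qed

lemma Gc_Suc_0: "Gc \<beta> (Suc j) 0 = - Gc \<beta> j 0"
  unfolding Gc_def by simp

lemma sign_choose: "((-1::'a::field_char_0) ^ (j - k) * of_nat (j choose Suc k)) =
   - ((-1) ^ (j - Suc k) * of_nat (j choose Suc k))"
proof (cases "k < j")
  case True
  then have "j - k = Suc (j - Suc k)" by simp
  then show ?thesis by simp
next
  case False
  then show ?thesis by simp
qed

lemma Gc_Suc_Suc: "Gc \<beta> (Suc j) (Suc t) = Gc \<beta> j t - Gc \<beta> j (Suc t)"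
proof -
  have "Gc \<beta> (Suc j) (Suc t) = (-1) ^ Suc j * \<beta> (Suc t) +
      (\<Sum>k = 0..t. (-1) ^ (j - k) * (of_nat (j choose k) + of_nat (j choose Suc k)) * \<beta> (t - k))"
    unfolding Gc_def by (subst sum.atLeast0_atMost_Suc_shift) simp
  also have "\<dots> = (-1) ^ Suc j * \<beta> (Suc t) + Gc \<beta> j t +
      (\<Sum>k = 0..t. (-1) ^ (j - k) * of_nat (j choose Suc k) * \<beta> (t - k))"
    unfolding Gc_def by (simp add: algebra_simps sum.distrib)
  also have "(\<Sum>k = 0..t. (-1) ^ (j - k) * of_nat (j choose Suc k) * \<beta> (t - k))
     = - (\<Sum>k = 0..t. (-1) ^ (j - Suc k) * of_nat (j choose Suc k) * \<beta> (t - k))"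
    by (simp add: sign_choose sum_negf[symmetric])
  also have "Gc \<beta> j (Suc t) = (-1) ^ j * \<beta> (Suc t) +
      (\<Sum>k = 0..t. (-1) ^ (j - Suc k) * of_nat (j choose Suc k) * \<beta> (t - k))"
    unfolding Gc_def by (subst sum.atLeast0_atMost_Suc_shift) simp
  ultimately show ?thesis by simp
qed

lemma Gc_vanish:
  assumes "\<And>t'. t' > d \<Longrightarrow> \<beta> t' = 0" and "t > d + j"
  shows "Gc \<beta> j t = 0"
  unfolding Gc_def
proof (rule sum.neutral, clarify)
  fix k assume "k \<in> {0..t}"
  show "(-1) ^ (j - k) * of_nat (j choose k) * \<beta> (t - k) = 0"
  proof (cases "k \<le> j")
    case True then have "t - k > d" using assms(2) by simp
    then show ?thesis using assms(1) by simp
  next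
    case False then show ?thesis by simp
  qed
qed

lemma sum_trunc:
  fixes A B :: nat
  assumes "\<And>k. min A B < k \<Longrightarrow> g k = 0"
  shows "sum g {0..A} = (sum g {0..B} :: 'a::comm_monoid_add)"
proof -
  have "sum g {0..A} = sum g {0..min A B}"
    by (rule sum.mono_neutral_right) (auto simp: assms)
  also have "\<dots> = sum g {0..B}"
    by (rule sum.mono_neutral_left) (auto simp: assms)
  finally show ?thesis .
qed

lemma assoc4: "f * a = b \<Longrightarrow> x * y * f * a = x * y * (b::'a::comm_semiring_1)"
  by (simp add: mult.assoc)

lemma frac_acoef:
  fixes \<beta> :: "nat \<Rightarrow> 'a::field_char_0"
  assumes t: "t \<le> d" "t \<le> m" and b0: "\<beta> 0 = 1"
  shows "fact (m - t) / (fact t * fact m) *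
         acoef (\<lambda>t. \<beta> t * fact t * fact m / fact (m - t)) d (int t) = \<beta> t"
proof (cases "t = 0")
  case True then show ?thesis using b0 by (simp add: acoef_def)
next
  case False
  then have "acoef (\<lambda>t. \<beta> t * fact t * fact m / fact (m - t)) d (int t) = \<beta> t * fact t * fact m / fact (m - t)"
    using t by (simp add: acoef_def)
  then show ?thesis by simp
qed

lemma coef1_Gc:
  fixes \<beta> :: "nat \<Rightarrow> 'a::field_char_0"
  assumes "\<theta> \<le> n - s" "\<theta> \<le> m" "\<beta> 0 = 1"
  shows "coef1 m n s 0 (\<lambda>t. \<beta> t * fact t * fact m / fact (m - t)) j \<theta> = Gc \<beta> j \<theta>"
  unfolding coef1_def Gc_def
proof (rule sum.cong[OF refl])
  fix k assume k: "k \<in> {0..\<theta>}"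
  have e1: "int \<theta> - int k = int (\<theta> - k)" using k by auto
  have e2: "m - 0 - \<theta> + k = m - (\<theta> - k)" using k assms by auto
  have e3: "0 + \<theta> - k = \<theta> - k" by simp
  show "(-1) ^ (j - k) * of_nat (j choose k) * (fact (m - 0 - \<theta> + k) / (fact (0 + \<theta> - k) * fact m)) *
          acoef (\<lambda>t. \<beta> t * fact t * fact m / fact (m - t)) (n - s) (int \<theta> - int k) =
        (-1) ^ (j - k) * of_nat (j choose k) * \<beta> (\<theta> - k)"
  proof -
    have fa: "fact (m - (\<theta> - k)) / (fact (\<theta> - k) * fact m) *
         acoef (\<lambda>t. \<beta> t * fact t * fact m / fact (m - t)) (n - s) (int (\<theta> - k)) = \<beta> (\<theta> - k)"
      using frac_acoef[of "\<theta> - k" "n - s" m \<beta>] assms by simp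
    show ?thesis unfolding e1 e2 e3 by (rule assoc4[OF fa])
  qed
qed

lemma coef2_Gc:
  fixes \<beta> :: "nat \<Rightarrow> 'a::field_char_0"
  assumes sn: "s \<le> n" and dm: "n - s + \<theta> \<le> m" and b0: "\<beta> 0 = 1"
    and bz: "\<And>t. t > n - s \<Longrightarrow> \<beta> t = 0"
  shows "coef2 m n s 0 (\<lambda>t. \<beta> t * fact t * fact m / fact (m - t)) j \<theta> = Gc \<beta> j (n - s + \<theta>)"
proof -
  define d where "d = n - s"
  define a where "a = (\<lambda>t. \<beta> t * fact t * fact m / fact (m - t))"
  define g where "g k = (if k \<le> d then (-1) ^ (j - \<theta> - k) * of_nat (j choose (\<theta> + k)) * \<beta> (d - k) else 0)" for k
  have "coef2 m n s 0 a j \<theta> = (\<Sum>k = 0..j - \<theta>. g k)"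
    unfolding coef2_def
  proof (rule sum.cong[OF refl])
    fix k assume k: "k \<in> {0..j - \<theta>}"
    show "(-1) ^ (j - \<theta> - k) * of_nat (j choose (\<theta> + k)) *
          (fact (m + s + k - 0 - n) / (fact (0 + n - s - k) * fact m)) *
          acoef a (n - s) (int n - int s - int k) = g k"
    proof (cases "k \<le> d")
      case True
      have e1: "int n - int s - int k = int (d - k)" using True sn by (auto simp: d_def)
      have e2: "m + s + k - 0 - n = m - (d - k)" using True sn dm by (auto simp: d_def)
      have e3: "0 + n - s - k = d - k" by (simp add: d_def)
      have fa: "fact (m - (d - k)) / (fact (d - k) * fact m) * acoef a (n - s) (int (d - k)) = \<beta> (d - k)"
        using frac_acoef[of "d - k" d m \<beta>] True dm b0 by (simp add: a_def d_def)
      show ?thesis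
        unfolding e1 e2 e3 g_def using True by (simp only: if_True) (rule assoc4[OF fa])
    next
      case False
      then have "int n - int s - int k < 0" using sn by (auto simp: d_def)
      then show ?thesis using False by (simp add: acoef_def g_def)
    qed
  qed
  also have "\<dots> = (\<Sum>k = 0..d. g k)"
  proof (rule sum_trunc)
    fix k assume "min (j - \<theta>) d < k"
    then show "g k = 0" by (auto simp: g_def)
  qed
  also have "\<dots> = Gc \<beta> j (d + \<theta>)"
  proof -
    define h where "h k' = (-1) ^ (j - k') * of_nat (j choose k') * \<beta> (d + \<theta> - k')" for k'
    have "Gc \<beta> j (d + \<theta>) = sum h {0..d + \<theta>}" by (simp add: Gc_def h_def)
    also have "\<dots> = sum h {0 + \<theta>..d + \<theta>}"
      by (rule sum.mono_neutral_right) (auto simp: h_def bz d_def)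
    also have "\<dots> = (\<Sum>k = 0..d. h (k + \<theta>))" by (rule sum.shift_bounds_cl_nat_ivl)
    also have "\<dots> = (\<Sum>k = 0..d. g k)"
      by (rule sum.cong) (auto simp: h_def g_def add.commute diff_diff_eq)
    finally show ?thesis by simp
  qed
  finally show ?thesis by (simp add: a_def d_def)
qed

theorem proposition0p5:
  fixes scale :: "'a::field_char_0 \<Rightarrow> 'v::ab_group_add \<Rightarrow> 'v"
    and L :: nat
    and F H E :: "'v \<Rightarrow> 'v"
    and Z :: "nat \<Rightarrow> 'v \<Rightarrow> 'v"
    and V0 V1 :: "'v set"
  assumes "L \<ge> 1"
    and "triangular_2irr_module scale L F H E Z V0 V1"
    and "\<exists>j\<le>L. \<exists>v. Z j v \<noteq> 0"
  shows "\<exists>m n s N a u w. m + 2 * s = L + n + 2 * N \<and> s \<le> n \<and> N \<le> m \<and>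
           is_model_basis scale L F H E Z V0 V1 m n s N a u w"
proof -
  note T = assms(2)[unfolded triangular_2irr_module_def]
  have rep: "sl2L_rep scale L F H E Z" using T by (elim conjE)
  note R = rep[unfolded sl2L_rep_def]
  have vs: "vector_space scale" using R by (elim conjE)
  interpret V: VS scale using vs by (simp add: VS_def)
  have linop_of: "V.linop f" if "Vector_Spaces.linear scale scale f" for f
    using that unfolding Vector_Spaces.linear_iff V.linop_def by (elim conjE) (intro conjI)
  have exB: "\<exists>B. finite B \<and> V.span B = UNIV" using T by (elim conjE)
  then obtain B where finB: "finite B" and spanB: "V.span B = UNIV" by blast
  have lF: "Vector_Spaces.linear scale scale F" using R by (elim conjE)
  have lH: "Vector_Spaces.linear scale scale H" using R by (elim conjE)
  have lE: "Vector_Spaces.linear scale scale E" using R by (elim conjE)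
  have lZ: "\<forall>j\<le>L. Vector_Spaces.linear scale scale (Z j)" using R by (elim conjE)
  have linF: "V.linop F" and linH: "V.linop H" and linE: "V.linop E"
    using lF lH lE linop_of by blast+
  have linZ: "V.linop (Z j)" if "j \<le> L" for j using lZ linop_of that by blast
  have rE: "\<forall>v. H (E v) - E (H v) = scale 2 (E v)" using R by (elim conjE)
  have rF: "\<forall>v. H (F v) - F (H v) = scale (-2) (F v)" using R by (elim conjE)
  have rEF: "\<forall>v. E (F v) - F (E v) = H v" using R by (elim conjE)
  have hE: "H (E v) = E (H v) + scale 2 (E v)" for v
  proof -
    have "H (E v) - E (H v) = scale 2 (E v)" using rE by blast
    then show ?thesis by (simp add: diff_eq_eq add.commute)
  qed
  have hF: "H (F v) = F (H v) - scale 2 (F v)" for v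
  proof -
    have "H (F v) - F (H v) = - scale 2 (F v)" using rF by simp
    then show ?thesis by (simp add: algebra_simps)
  qed
  have eF: "E (F v) = F (E v) + H v" for v
  proof -
    have "E (F v) - F (E v) = H v" using rEF by blast
    then show ?thesis by (simp add: diff_eq_eq add.commute)
  qed
  interpret S: SL2 scale B F H E
    by (rule SL2.intro, rule FD.intro, rule V.VS_axioms)
       (unfold_locales, (fact finB spanB linF linH linE hE hF eF)+)
  have sub0: "V.subspace V0" using T by (elim conjE) assumption
  have sub1: "V.subspace V1" using T by (elim conjE) assumption
  have dec: "\<forall>v. \<exists>x\<in>V0. \<exists>y\<in>V1. v = x + y" using T by (elim conjE)
  have FV0: "F ` V0 \<subseteq> V0" using T by (elim conjE) assumption
  have HV0: "H ` V0 \<subseteq> V0" using T by (elim conjE) assumption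
  have EV0: "E ` V0 \<subseteq> V0" using T by (elim conjE) assumption
  have FV1: "F ` V1 \<subseteq> V1" using T by (elim conjE) assumption
  have HV1: "H ` V1 \<subseteq> V1" using T by (elim conjE) assumption
  have EV1: "E ` V1 \<subseteq> V1" using T by (elim conjE) assumption
  have ZV: "\<forall>j\<le>L. Z j ` V0 \<subseteq> V1 \<and> Z j ` V1 \<subseteq> {0}" using T by (elim conjE)
  have irr0: "sl2_irreducible scale F H E V0" using T by (elim conjE) assumption
  have irr1: "sl2_irreducible scale F H E V1" using T by (elim conjE) assumption
  have ZV0: "Z j x \<in> V1" if "j \<le> L" "x \<in> V0" for j x using ZV that by blast
  have ZV1: "Z j y = 0" if "j \<le> L" "y \<in> V1" for j y using ZV that by blast
  have rZF: "\<forall>j\<le>L. \<forall>v. F (Z j v) - Z j (F v) = zext L Z (j + 1) v" using R by (elim conjE)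
  have rZH: "\<forall>j\<le>L. \<forall>v. H (Z j v) - Z j (H v) = scale (of_int (int L - 2 * int j)) (Z j v)"
    using R by (elim conjE)
  have rZE: "\<forall>j\<le>L. \<forall>v. E (Z j v) - Z j (E v) =
        (if j = 0 then 0 else scale (of_nat (j * (L - j + 1))) (zext L Z (j - 1) v))"
    using R by (elim conjE)
  have ZF: "Z (Suc j) x = F (Z j x) - Z j (F x)" if "j < L" for j x
    using rZF that by (auto simp: zext_def)
  have ZE0: "E (Z 0 x) = Z 0 (E x)" for x
    using rZE by auto
  have ZH: "H (Z j x) = Z j (H x) + scale (of_int (int L - 2 * int j)) (Z j x)" if "j \<le> L" for j x
    using rZH that by (metis diff_eq_eq add.commute)
  have nz0: "V0 \<noteq> {0}" and irr0': "\<forall>U. V.subspace U \<and> U \<subseteq> V0 \<and> F ` U \<subseteq> U \<and> H ` U \<subseteq> U \<and> E ` U \<subseteq> U \<longrightarrow> U = {0} \<or> U = V0"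
    using irr0 unfolding sl2_irreducible_def by blast+
  have irr1': "\<forall>U. V.subspace U \<and> U \<subseteq> V1 \<and> F ` U \<subseteq> U \<and> H ` U \<subseteq> U \<and> E ` U \<subseteq> U \<longrightarrow> U = {0} \<or> U = V1"
    using irr1 unfolding sl2_irreducible_def by blast
  obtain n u where sbu: "S.std_basis V0 n u"
    using S.irr_basis[OF sub0 FV0 HV0 EV0 irr0' nz0] by blast
  have uinj: "inj_on u {..n}"
    using sbu unfolding S.std_basis_def by (elim conjE) assumption
  have uind: "V.independent (u ` {..n})"
    using sbu unfolding S.std_basis_def by (elim conjE) assumption
  have uspan: "V.span (u ` {..n}) = V0"
    using sbu unfolding S.std_basis_def by (elim conjE) assumption
  have Hu: "\<forall>i\<le>n. H (u i) = scale (of_int (int n - 2 * int i)) (u i)"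
    using sbu unfolding S.std_basis_def by (elim conjE) assumption
  have Fu: "\<forall>i\<le>n. F (u i) = (if i < n then u (i + 1) else 0)"
    using sbu unfolding S.std_basis_def by (elim conjE) assumption
  have Eu: "\<forall>i\<le>n. E (u i) = (if i = 0 then 0 else scale (of_nat (i * (n - i + 1))) (u (i - 1)))"
    using sbu unfolding S.std_basis_def by (elim conjE) assumption
  have uV0: "u i \<in> V0" if "i \<le> n" for i
  proof -
    have "u i \<in> u ` {..n}" using that by simp
    then have "u i \<in> V.span (u ` {..n})" by (rule V.span_base)
    then show ?thesis using uspan by simp
  qed
  have exs: "\<exists>i. i \<le> n \<and> Z 0 (u i) \<noteq> 0"
  proof (rule ccontr)
    assume "\<not> (\<exists>i. i \<le> n \<and> Z 0 (u i) \<noteq> 0)"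
    then have z0: "\<forall>i\<le>n. Z 0 (u i) = 0" by blast
    have zall: "\<forall>i\<le>n. Z j (u i) = 0" if "j \<le> L" for j
      using that
    proof (induction j)
      case 0 then show ?case using z0 by blast
    next
      case (Suc j)
      show ?case
      proof (intro allI impI)
        fix i assume i: "i \<le> n"
        have "Z (Suc j) (u i) = F (Z j (u i)) - Z j (F (u i))" using ZF Suc.prems by simp
        also have "\<dots> = 0"
          using Suc i Fu V.lin_0[OF linF] V.lin_0[OF linZ[of j]] by (auto simp: Suc_le_eq)
        finally show "Z (Suc j) (u i) = 0" .
      qed
    qed
    obtain j v where jv: "j \<le> L" "Z j v \<noteq> 0" using assms(3) by blast
    obtain x y where xy: "x \<in> V0" "y \<in> V1" "v = x + y" using dec by blast
    have "Z j x = 0"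
      using V.lin_eq_0_on_span[OF linZ[OF jv(1)], of "u ` {..n}" x] zall[OF jv(1)] xy(1) uspan by auto
    then have "Z j v = 0" using xy ZV1[OF jv(1) xy(2)] V.lin_add[OF linZ[OF jv(1)]] by simp
    then show False using jv by simp
  qed
  define s where "s = (LEAST i. i \<le> n \<and> Z 0 (u i) \<noteq> 0)"
  have s: "s \<le> n" "Z 0 (u s) \<noteq> 0" using LeastI_ex[OF exs] by (auto simp: s_def)
  have belows: "Z 0 (u i) = 0" if "i < s" for i
    using not_less_Least[of i "\<lambda>i. i \<le> n \<and> Z 0 (u i) \<noteq> 0"] that s(1) by (auto simp: s_def)
  define v1 where "v1 = Z 0 (u s)"
  have v1V1: "v1 \<in> V1" using ZV0[of 0 "u s"] uV0[OF s(1)] by (simp add: v1_def)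
  have Ev1: "E v1 = 0"
  proof (cases s)
    case 0 then show ?thesis using Eu s(1) ZE0 V.lin_0[OF linZ[of 0]] by (simp add: v1_def)
  next
    case (Suc s')
    have "E v1 = Z 0 (scale (of_nat (s * (n - s + 1))) (u s'))"
      using Eu s(1) ZE0 Suc by (simp add: v1_def)
    also have "\<dots> = 0" using belows[of s'] Suc V.lin_scale[OF linZ[of 0]] by simp
    finally show ?thesis .
  qed
  have Hv1: "H v1 = scale (of_int (int n - 2 * int s + int L)) v1"
  proof -
    have "H v1 = Z 0 (H (u s)) + scale (of_int (int L - 2 * int 0)) v1"
      using ZH[of 0 "u s"] by (simp add: v1_def)
    also have "Z 0 (H (u s)) = scale (of_int (int n - 2 * int s)) v1"
      using Hu s(1) V.lin_scale[OF linZ[of 0]] by (simp add: v1_def)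
    finally have "H v1 = scale (of_int (int n - 2 * int s)) v1 + scale (of_int (int L)) v1" by simp
    also have "\<dots> = scale (of_int (int n - 2 * int s) + of_int (int L)) v1"
      by (simp only: V.scale_left_distrib)
    finally show ?thesis by simp
  qed
  have v1nz: "v1 \<noteq> 0" using s(2) by (simp add: v1_def)
  obtain m where lam: "(of_int (int n - 2 * int s + int L) :: 'a) = of_nat m"
    and sbw: "S.std_basis V1 m (\<lambda>k. (F ^^ k) v1)"
    using S.hw_basis[OF sub1 FV1 HV1 EV1 irr1' v1V1 v1nz Ev1 Hv1] by blast
  define w where "w k = (F ^^ k) v1" for k
  have sbw': "S.std_basis V1 m w" using sbw by (simp add: w_def[abs_def])
  have mint: "int n - 2 * int s + int L = int m"
    using lam by (metis of_int_eq_iff of_int_of_nat_eq)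
  then have mrel: "m + 2 * s = L + n" by linarith
  have winj: "inj_on w {..m}"
    using sbw' unfolding S.std_basis_def by (elim conjE) assumption
  have wind: "V.independent (w ` {..m})"
    using sbw' unfolding S.std_basis_def by (elim conjE) assumption
  have wspan: "V.span (w ` {..m}) = V1"
    using sbw' unfolding S.std_basis_def by (elim conjE) assumption
  have Hw: "\<forall>k\<le>m. H (w k) = scale (of_int (int m - 2 * int k)) (w k)"
    using sbw' unfolding S.std_basis_def by (elim conjE) assumption
  have Fw: "\<forall>k\<le>m. F (w k) = (if k < m then w (k + 1) else 0)"
    using sbw' unfolding S.std_basis_def by (elim conjE) assumption
  have Ew: "\<forall>k\<le>m. E (w k) = (if k = 0 then 0 else scale (of_nat (k * (m - k + 1))) (w (k - 1)))"
    using sbw' unfolding S.std_basis_def by (elim conjE) assumption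
  have w0: "w 0 = v1" by (simp add: w_def)
  define \<beta> where "\<beta> t = (if t \<le> n - s \<and> t \<le> m then (SOME c. Z 0 (u (s + t)) = scale c (w t)) else 0)" for t
  have Z0w: "Z 0 (u i) = (if i - s \<le> m then scale (\<beta> (i - s)) (w (i - s)) else 0)"
    if i: "s \<le> i" "i \<le> n" for i
  proof -
    have inV1: "Z 0 (u i) \<in> V1" using ZV0[of 0 "u i"] uV0[OF i(2)] by simp
    have "H (Z 0 (u i)) = Z 0 (H (u i)) + scale (of_int (int L - 2 * int 0)) (Z 0 (u i))"
      using ZH[of 0 "u i"] by simp
    also have "Z 0 (H (u i)) = scale (of_int (int n - 2 * int i)) (Z 0 (u i))"
      using Hu i(2) V.lin_scale[OF linZ[of 0]] by simp
    finally have "H (Z 0 (u i)) = scale (of_int (int n - 2 * int i)) (Z 0 (u i)) + scale (of_int (int L)) (Z 0 (u i))"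
      by simp
    also have "\<dots> = scale (of_int (int n - 2 * int i) + of_int (int L)) (Z 0 (u i))"
      by (simp only: V.scale_left_distrib)
    also have "(of_int (int n - 2 * int i) + of_int (int L) :: 'a) = of_int (int m - 2 * int (i - s))"
    proof -
      have "int n - 2 * int i + int L = int m - 2 * int (i - s)" using mrel i(1) by (simp add: of_nat_diff)
      then have "(of_int (int n - 2 * int i + int L) :: 'a) = of_int (int m - 2 * int (i - s))" by simp
      then show ?thesis by (simp only: of_int_add)
    qed
    finally have HZ: "H (Z 0 (u i)) = scale (of_int (int m - 2 * int (i - s))) (Z 0 (u i))" .
    have wt: "k = i - s" if "k \<le> m" "(of_int (int m - 2 * int (i - s)) :: 'a) = of_int (int m - 2 * int k)" for k
    proof -
      have "int m - 2 * int (i - s) = int m - 2 * int k" using that(2) by (simp only: of_int_eq_iff)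
      then show ?thesis by simp
    qed
    have ex: "\<exists>c. Z 0 (u i) = scale c (w (i - s))" if "i - s \<le> m"
    proof (cases "Z 0 (u i) = 0")
      case True then show ?thesis by (intro exI[of _ 0]) simp
    next
      case False
      obtain k where k: "k \<le> m" "(of_int (int m - 2 * int (i - s)) :: 'a) = of_int (int m - 2 * int k)"
        "\<exists>c. Z 0 (u i) = scale c (w k)"
        using S.weight_vec[OF sbw' inV1 HZ False] by blast
      then show ?thesis using wt[OF k(1,2)] by simp
    qed
    have zero: "Z 0 (u i) = 0" if "\<not> i - s \<le> m"
    proof (rule ccontr)
      assume nz: "Z 0 (u i) \<noteq> 0"
      obtain k where k: "k \<le> m" "(of_int (int m - 2 * int (i - s)) :: 'a) = of_int (int m - 2 * int k)"
        using S.weight_vec[OF sbw' inV1 HZ nz] by blast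
      then show False using wt[OF k(1,2)] that by simp
    qed
    show ?thesis
    proof (cases "i - s \<le> m")
      case True
      have b: "\<beta> (i - s) = (SOME c. Z 0 (u (s + (i - s))) = scale c (w (i - s)))"
        using True i by (simp add: \<beta>_def)
      have "s + (i - s) = i" using i by simp
      then have "Z 0 (u i) = scale (\<beta> (i - s)) (w (i - s))"
        using someI_ex[OF ex[OF True]] b by simp
      then show ?thesis using True by simp
    next
      case False then show ?thesis using zero by simp
    qed
  qed
  have \<beta>0: "\<beta> 0 = 1"
  proof -
    have "Z 0 (u s) = scale 1 (w 0)" using w0 by (simp add: v1_def)
    then have ex: "\<exists>c. Z 0 (u (s + 0)) = scale c (w 0)" by (intro exI[of _ 1]) simp
    have "Z 0 (u (s + 0)) = scale (\<beta> 0) (w 0)"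
      using someI_ex[OF ex] by (simp add: \<beta>_def)
    then have "scale (\<beta> 0) (w 0) = scale 1 (w 0)" using w0 by (simp add: v1_def)
    moreover have "w 0 \<noteq> 0" using v1nz w0 by simp
    ultimately show ?thesis using V.scale_right_imp_eq by blast
  qed
  have \<beta>z: "\<beta> t = 0" if "t > n - s" for t using that by (simp add: \<beta>_def)
  define ZZ where "ZZ j i = (if s \<le> i + j \<and> i + j - s \<le> m then scale (Gc \<beta> j (i + j - s)) (w (i + j - s)) else 0)" for j i
  have FZZ: "F (ZZ j i) = (if s \<le> i + j \<and> i + j - s < m then scale (Gc \<beta> j (i + j - s)) (w (Suc (i + j - s))) else 0)" for j i
    using Fw by (auto simp: ZZ_def V.lin_scale[OF linF] V.lin_0[OF linF])
  have claim: "\<forall>i\<le>n. Z j (u i) = ZZ j i" if "j \<le> L" for j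
    using that
  proof (induction j)
    case 0
    show ?case
    proof (intro allI impI)
      fix i assume i: "i \<le> n"
      show "Z 0 (u i) = ZZ 0 i"
      proof (cases "s \<le> i")
        case True then show ?thesis using Z0w[OF True i] by (simp add: ZZ_def Gc_0)
      next
        case False then show ?thesis using belows[of i] by (simp add: ZZ_def)
      qed
    qed
  next
    case (Suc j)
    have jL: "j < L" "j \<le> L" using Suc.prems by auto
    have IH: "\<forall>i\<le>n. Z j (u i) = ZZ j i" using Suc.IH jL by simp
    show ?case
    proof (intro allI impI)
      fix i assume i: "i \<le> n"
      have ZFu: "Z j (F (u i)) = (if i < n then ZZ j (Suc i) else 0)"
        using Fu i IH V.lin_0[OF linZ[OF jL(2)]] by auto
      have "Z (Suc j) (u i) = F (ZZ j i) - (if i < n then ZZ j (Suc i) else 0)"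
        using ZF[OF jL(1), of "u i"] IH i ZFu by simp
      also have "\<dots> = ZZ (Suc j) i"
      proof -
        consider (A) "i + Suc j < s" | (B) "i + Suc j = s" | (C) "s \<le> i + j" by linarith
        then show ?thesis
        proof cases
          case A then show ?thesis by (simp only: FZZ) (simp add: ZZ_def)
        next
          case B
          then have "i < n" using s(1) by simp
          then show ?thesis using B by (simp only: FZZ) (simp add: ZZ_def Gc_Suc_0)
        next
          case C
          define t where "t = i + j - s"
          have t1: "i + Suc j - s = Suc t" and t2: "Suc i + j - s = Suc t" using C by (auto simp: t_def)
          show ?thesis
          proof (cases "Suc t \<le> m")
            case True
            show ?thesis
            proof (cases "i < n")
              case True
              then show ?thesis using C \<open>Suc t \<le> m\<close> t1 t2
                by (simp only: FZZ) (simp add: ZZ_def Gc_Suc_Suc t_def[symmetric] V.scale_left_diff_distrib)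
            next
              case False
              then have "i = n" using i by simp
              have "Gc \<beta> j (Suc t) = 0"
                by (rule Gc_vanish[of "n - s"]) (use \<beta>z \<open>i = n\<close> s(1) in \<open>auto simp: t_def\<close>)
              then show ?thesis using C \<open>Suc t \<le> m\<close> t1 False Gc_Suc_Suc[of \<beta> j t]
                by (simp only: FZZ) (simp add: ZZ_def t_def[symmetric])
            qed
          next
            case False
            then show ?thesis using C t1 t2 by (simp only: FZZ) (auto simp: ZZ_def t_def[symmetric])
          qed
        qed
      qed
      finally show "Z (Suc j) (u i) = ZZ (Suc j) i" .
    qed
  qed
  define a where "a = (\<lambda>t. \<beta> t * fact t * fact m / fact (m - t))"
  have Zw: "\<forall>j\<le>L. \<forall>k\<le>m. Z j (w k) = 0"
  proof (intro allI impI)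
    fix j k assume jk: "j \<le> L" "k \<le> m"
    have "w k \<in> w ` {..m}" using jk by simp
    then have "w k \<in> V.span (w ` {..m})" by (rule V.span_base)
    then show "Z j (w k) = 0" using ZV1[OF jk(1)] wspan by simp
  qed
  have zreg: "\<forall>j\<le>L. \<forall>i\<le>n. i + j < s \<longrightarrow> Z j (u i) = 0"
    using claim by (auto simp: ZZ_def)
  have fam1: "\<forall>\<theta>\<le>n - s. \<forall>j. j \<le> min (s + \<theta>) L \<longrightarrow>
        Z j (u (s + \<theta> - j)) =
          (if \<theta> + 0 \<le> m then scale (coef1 m n s 0 a j \<theta>) (w (\<theta> + 0)) else 0)"
  proof (intro allI impI)
    fix \<theta> j assume th: "\<theta> \<le> n - s" and j: "j \<le> min (s + \<theta>) L"
    have i: "s + \<theta> - j \<le> n" using th s(1) by simp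
    have ij: "s + \<theta> - j + j - s = \<theta>" using j by simp
    have "Z j (u (s + \<theta> - j)) = ZZ j (s + \<theta> - j)" using claim[of j] j i by simp
    also have "\<dots> = (if \<theta> \<le> m then scale (Gc \<beta> j \<theta>) (w \<theta>) else 0)"
      using ij j by (simp add: ZZ_def)
    also have "\<dots> = (if \<theta> + 0 \<le> m then scale (coef1 m n s 0 a j \<theta>) (w (\<theta> + 0)) else 0)"
      using coef1_Gc[where \<theta>=\<theta> and n=n and s=s and m=m and \<beta>=\<beta> and j=j] th \<beta>0
      by (auto simp: a_def)
    finally show "Z j (u (s + \<theta> - j)) = (if \<theta> + 0 \<le> m then scale (coef1 m n s 0 a j \<theta>) (w (\<theta> + 0)) else 0)" .
  qed
  have fam2: "\<forall>j \<theta>. 1 \<le> \<theta> \<and> \<theta> \<le> j \<and> j \<le> L \<and> j \<le> n + \<theta> \<longrightarrow>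
        Z j (u (n + \<theta> - j)) =
          (if n - s + \<theta> + 0 \<le> m then scale (coef2 m n s 0 a j \<theta>) (w (n - s + \<theta> + 0)) else 0)"
  proof (intro allI impI)
    fix j \<theta> assume hyp: "1 \<le> \<theta> \<and> \<theta> \<le> j \<and> j \<le> L \<and> j \<le> n + \<theta>"
    then have h1: "1 \<le> \<theta>" "\<theta> \<le> j" "j \<le> L" "j \<le> n + \<theta>" by auto
    have i: "n + \<theta> - j \<le> n" using h1 by linarith
    have ij: "n + \<theta> - j + j = n + \<theta>" using h1 by linarith
    have ij2: "n + \<theta> - j + j - s = n - s + \<theta>" using h1 s(1) by linarith
    have "Z j (u (n + \<theta> - j)) = ZZ j (n + \<theta> - j)" using claim[of j] h1 i by simp
    also have "\<dots> = (if n - s + \<theta> \<le> m then scale (Gc \<beta> j (n - s + \<theta>)) (w (n - s + \<theta>)) else 0)"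
      using ij ij2 s(1) by (simp add: ZZ_def)
    also have "\<dots> = (if n - s + \<theta> + 0 \<le> m then scale (coef2 m n s 0 a j \<theta>) (w (n - s + \<theta> + 0)) else 0)"
      using coef2_Gc[where \<theta>=\<theta> and n=n and s=s and m=m and \<beta>=\<beta> and j=j] s(1) \<beta>0 \<beta>z
      by (auto simp: a_def)
    finally show "Z j (u (n + \<theta> - j)) =
          (if n - s + \<theta> + 0 \<le> m then scale (coef2 m n s 0 a j \<theta>) (w (n - s + \<theta> + 0)) else 0)" .
  qed
  have model: "is_model_basis scale L F H E Z V0 V1 m n s 0 a u w"
    unfolding is_model_basis_def
    using uinj uind uspan winj wind wspan Hu Fu Eu Hw Fw Ew Zw zreg fam1 fam2
    by (intro conjI) assumption+
  show ?thesis
    using model mrel s(1) by (intro exI[of _ m] exI[of _ n] exI[of _ s] exI[of _ 0] exI[of _ a] exI[of _ u] exI[of _ w]) simp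
qed

end
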